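(* There exist a comparable abstract numeration system $\mathcal{S}$ and an $\mathcal{S}$-automatic infinite word $\mathbf{x}$ such that the winning shift $W(X)$ of the orbit closure $X$ of $\mathbf{x}$ has infinite coding dimension.
   Context: ANS: $\mathcal{S}=(L,\prec)$ with $L$ an infinite language and $\prec$ a total order on $L$ of order type $\omega$; $\mathrm{rep}(n)$ is the $n$-th word of $L$; tuples are represented by left-padding component representations with a new symbol $\#$ to equal length; $Y\subseteq\mathbb{N}^d$ is $\mathcal{S}$-recognizable if $\mathrm{rep}(Y)$ is regular. $\mathcal{S}$ is comparable if $\{(x,y):x\le y\}$ is $\mathcal{S}$-recognizable. $\mathbf{x}$ is $\mathcal{S}$-automatic if a DFA with output outputs $\mathbf{x}[n]$ on input $\mathrm{rep}(n)$ for all $n\ge0$. Winning shift: for $X\subseteq A^{\mathbb{N}}$ and a choice sequence $\alpha\in\{0,\dots,|A|-1\}^{\mathbb{N}}$, Alice and Bob play infinitely many rounds; in round $j$ Alice chooses $A_j\subseteq A$ with $|A_j|=\alpha_j+1$ and Bob chooses $a_j\in A_j$; Alice wins if $a_0a_1\cdots\in X$. $W(X)$ is the set of $\alpha$ for which Alice has a winning strategy. Infinite coding dimension: no $d$ bounds $\sum_iy_i$ over $\mathbf{y}\in W(X)$. *)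

theory Defs
  imports "HOL-Analysis.Analysis"
begin

definition regular_lang :: "'a list set \<Rightarrow> bool" where
  "regular_lang Lg \<longleftrightarrow>
     (\<exists>(Gam :: 'a set) (Q :: nat set) (delta :: nat \<Rightarrow> 'a \<Rightarrow> nat) q0 F.
        finite Gam \<and> finite Q \<and> q0 \<in> Q \<and> F \<subseteq> Q \<and>
        (\<forall>q\<in>Q. \<forall>c\<in>Gam. delta q c \<in> Q) \<and>
        Lg = {w \<in> lists Gam. foldl delta q0 w \<in> F})"

definition is_ANS :: "nat set \<Rightarrow> nat list set \<Rightarrow> (nat list \<Rightarrow> nat list \<Rightarrow> bool) \<Rightarrow> bool" where
  "is_ANS Alph Lang lt \<longleftrightarrow>
     finite Alph \<and> Lang \<subseteq> lists Alph \<and> infinite Lang \<and>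
     (\<exists>f. bij_betw f UNIV Lang \<and> (\<forall>m n::nat. m < n \<longleftrightarrow> lt (f m) (f n)))"

definition ans_rep :: "nat list set \<Rightarrow> (nat list \<Rightarrow> nat list \<Rightarrow> bool) \<Rightarrow> nat \<Rightarrow> nat list" where
  "ans_rep Lang lt n = (THE w. w \<in> Lang \<and> card {v \<in> Lang. lt v w} = n)"

text \<open>Left padding with the new symbol # (encoded as None).\<close>

definition pad_left :: "nat \<Rightarrow> nat list \<Rightarrow> nat option list" where
  "pad_left m w = replicate (m - length w) None @ map Some w"

text \<open>Representation of a tuple (given as a list of components): the components'
  representations are left-padded to a common length and read in parallel.\<close>

definition rep_tuple :: "nat list set \<Rightarrow> (nat list \<Rightarrow> nat list \<Rightarrow> bool) \<Rightarrow> nat list \<Rightarrow> nat option list list" where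
  "rep_tuple Lang lt xs =
     (let ws = map (ans_rep Lang lt) xs;
          m = foldr max (map length ws) 0
      in map (\<lambda>i. map (\<lambda>w. pad_left m w ! i) ws) [0..<m])"

definition S_recognizable :: "nat list set \<Rightarrow> (nat list \<Rightarrow> nat list \<Rightarrow> bool) \<Rightarrow> nat list set \<Rightarrow> bool" where
  "S_recognizable Lang lt Y \<longleftrightarrow> regular_lang (rep_tuple Lang lt ` Y)"

definition S_comparable :: "nat list set \<Rightarrow> (nat list \<Rightarrow> nat list \<Rightarrow> bool) \<Rightarrow> bool" where
  "S_comparable Lang lt \<longleftrightarrow> S_recognizable Lang lt {[x, y] | x y. x \<le> y}"

definition S_automatic :: "nat set \<Rightarrow> nat list set \<Rightarrow> (nat list \<Rightarrow> nat list \<Rightarrow> bool) \<Rightarrow> (nat \<Rightarrow> nat) \<Rightarrow> bool" where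
  "S_automatic Alph Lang lt x \<longleftrightarrow>
     (\<exists>(Q :: nat set) (delta :: nat \<Rightarrow> nat \<Rightarrow> nat) q0 (tau :: nat \<Rightarrow> nat).
        finite Q \<and> q0 \<in> Q \<and> (\<forall>q\<in>Q. \<forall>c\<in>Alph. delta q c \<in> Q) \<and>
        (\<forall>n. x n = tau (foldl delta q0 (ans_rep Lang lt n))))"

definition orbit_closure :: "(nat \<Rightarrow> nat) \<Rightarrow> (nat \<Rightarrow> nat) set" where
  "orbit_closure x = closure (range (\<lambda>k i. x (k + i)))"

text \<open>Winning shift W(X) over alphabet A. Alice's strategy maps the history of Bob's
  moves a_0 .. a_(j-1) to the set A_j.\<close>

definition winning_shift :: "nat set \<Rightarrow> (nat \<Rightarrow> nat) set \<Rightarrow> (nat \<Rightarrow> nat) set" where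
  "winning_shift A X =
     {alpha. (\<forall>j. alpha j < card A) \<and>
        (\<exists>sigma :: nat list \<Rightarrow> nat set.
           (\<forall>h. sigma h \<subseteq> A \<and> card (sigma h) = alpha (length h) + 1) \<and>
           (\<forall>a. (\<forall>j. a j \<in> sigma (map a [0..<j])) \<longrightarrow> a \<in> X))}"

definition infinite_coding_dimension :: "(nat \<Rightarrow> nat) set \<Rightarrow> bool" where
  "infinite_coding_dimension W \<longleftrightarrow> (\<forall>d::nat. \<exists>y\<in>W. \<exists>n. d < (\<Sum>i<n. y i))"

end

theory Submission
  imports Defs "HOL-Library.Countable"
begin


fun bval :: "nat list \<Rightarrow> nat" where
  "bval [] = 0" | "bval (x#xs) = x * 2^length xs + bval xs"

definition tb :: "nat \<Rightarrow> nat" where "tb c = c mod 2"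
definition mb :: "nat \<Rightarrow> nat" where "mb c = c div 2"
definition tv :: "nat list \<Rightarrow> nat" where "tv w = bval (map tb w)"
definition mv :: "nat list \<Rightarrow> nat" where "mv w = bval (map mb w)"
definition code :: "nat list \<Rightarrow> nat" where
  "code w = 4^length w + tv w * 2^length w + mv w"
definition LL :: "nat list set" where
  "LL = {w \<in> lists {0..3}. sum_list (map mb w) = 1}"
definition ltc :: "nat list \<Rightarrow> nat list \<Rightarrow> bool" where
  "ltc v w \<longleftrightarrow> code v < code w"

lemma bval_append: "bval (xs @ ys) = bval xs * 2^length ys + bval ys"
  by (induction xs) (auto simp: algebra_simps power_add)

lemma bval_lt: "\<forall>x\<in>set xs. x < 2 \<Longrightarrow> bval xs < 2^length xs"
proof (induction xs)
  case Nil then show ?case by simp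
next
  case (Cons x xs)
  then have "x \<le> 1" "bval xs < 2^length xs" by auto
  moreover have "x * 2^length xs \<le> 1 * 2^length xs" using \<open>x \<le> 1\<close> by (rule mult_le_mono1)
  ultimately have "x * 2^length xs + bval xs < 1 * 2^length xs + 2^length xs"
    by linarith
  then show ?case by simp
qed

lemma bval_replicate0 [simp]: "bval (replicate k 0) = 0"
  by (induction k) auto

lemma div_mod_eq2:
  fixes a b X Y n :: nat
  assumes "X < n" "Y < n" "a * n + X = b * n + Y"
  shows "a = b \<and> X = Y"
proof -
  have "a = (a * n + X) div n" using assms(1) by simp
  also have "\<dots> = (b * n + Y) div n" using assms(3) by simp
  also have "\<dots> = b" using assms(2) by simp
  finally have "a = b" .
  then show ?thesis using assms by simp
qed

lemma bval_inj:
  "length xs = length ys \<Longrightarrow> \<forall>x\<in>set xs. x<2 \<Longrightarrow> \<forall>y\<in>set ys. y<2 \<Longrightarrow> bval xs = bval ys \<Longrightarrow> xs = ys"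
proof (induction xs ys rule: list_induct2)
  case Nil then show ?case by simp
next
  case (Cons x xs y ys)
  have h1: "\<forall>z\<in>set xs. z<2" "\<forall>z\<in>set ys. z<2" using Cons.prems by auto
  have "bval xs < 2^length xs" using bval_lt h1 by blast
  then have b1: "bval xs < 2^length ys" using Cons.hyps(1) by simp
  have b2: "bval ys < 2^length ys" using bval_lt h1 by blast
  have "x * 2^length ys + bval xs = y * 2^length ys + bval ys"
    using Cons.prems(3) Cons.hyps(1) by simp
  then have "x = y \<and> bval xs = bval ys" using div_mod_eq2[OF b1 b2] by blast
  with Cons show ?case by auto
qed

lemma tb_lt [simp]: "tb c < 2" by (simp add: tb_def)
lemma mb_lt: "c \<le> 3 \<Longrightarrow> mb c < 2" by (simp add: mb_def)

lemma tv_lt: "tv w < 2^length w"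
  unfolding tv_def using bval_lt[of "map tb w"] by simp

lemma mv_lt: "w \<in> lists {0..3} \<Longrightarrow> mv w < 2^length w"
  unfolding mv_def using bval_lt[of "map mb w"] mb_lt by force

lemma four_pow: "(4::nat)^n = 2^n * 2^n"
  by (metis mult_2_right numeral_Bit0 power_mult_distrib)

lemma code_lb: "4^length w \<le> code w"
  by (simp add: code_def)

lemma code_ub: assumes "w \<in> lists {0..3}" shows "code w < 2 * 4^length w"
proof -
  let ?n = "length w"
  have "tv w * 2^?n + mv w < tv w * 2^?n + 2^?n" using mv_lt[OF assms] by simp
  also have "\<dots> = (tv w + 1) * 2^?n" by simp
  also have "\<dots> \<le> 2^?n * 2^?n" using tv_lt[of w] by (intro mult_le_mono1) simp
  finally show ?thesis unfolding code_def four_pow by simp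
qed

lemma code_len_less:
  assumes "u \<in> lists {0..3}" "length u < length v"
  shows "code u < code v"
proof -
  have "code u < 2 * 4^length u" by (rule code_ub[OF assms(1)])
  also have "\<dots> \<le> 4 * 4^length u" by simp
  also have "\<dots> = 4^Suc (length u)" by simp
  also have "\<dots> \<le> 4^length v" using assms(2) by (intro power_increasing) auto
  also have "\<dots> \<le> code v" by (rule code_lb)
  finally show ?thesis .
qed

lemma code_le_len:
  assumes "u \<in> lists {0..3}" "v \<in> lists {0..3}" "code u \<le> code v"
  shows "length u \<le> length v"
  using code_len_less[OF assms(2)] assms(3) by (meson leD not_le_imp_less)

lemma code_same_len:
  assumes "length u = length v" "u \<in> lists {0..3}" "v \<in> lists {0..3}"
  shows "code u \<le> code v \<longleftrightarrow> tv u < tv v \<or> (tv u = tv v \<and> mv u \<le> mv v)"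
proof -
  let ?n = "length v"
  have mu: "mv u < 2^?n" using mv_lt[OF assms(2)] assms(1) by simp
  have mvv: "mv v < 2^?n" using mv_lt[OF assms(3)] by simp
  have A: "code u \<le> code v \<longleftrightarrow> tv u * 2^?n + mv u \<le> tv v * 2^?n + mv v"
    unfolding code_def assms(1) by simp
  show ?thesis
  proof (cases "tv u < tv v")
    case True
    then have "tv u * 2^?n + mv u < (tv u + 1) * 2^?n" using mu by simp
    also have "\<dots> \<le> tv v * 2^?n" using True by (intro mult_le_mono1) simp
    finally show ?thesis using A True by simp
  next
    case False
    show ?thesis
    proof (cases "tv u = tv v")
      case True then show ?thesis using A by simp
    next
      case F2: False
      with False have "tv v < tv u" by simp
      then have "tv v * 2^?n + mv v < (tv v + 1) * 2^?n" using mvv by simp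
      also have "\<dots> \<le> tv u * 2^?n" using \<open>tv v < tv u\<close> by (intro mult_le_mono1) simp
      finally show ?thesis using A False F2 by simp
    qed
  qed
qed

lemma code_inj: "inj_on code (lists {0..3})"
proof (rule inj_onI)
  fix u v assume u: "u \<in> lists {0..3}" and v: "v \<in> lists {0..3}" and e: "code u = code v"
  have len: "length u = length v" using code_le_len[OF u v] code_le_len[OF v u] e by simp
  let ?n = "length v"
  have "tv u * 2^?n + mv u = tv v * 2^?n + mv v" using e unfolding code_def len by simp
  moreover have "mv u < 2^?n" using mv_lt[OF u] len by simp
  moreover have "mv v < 2^?n" using mv_lt[OF v] by simp
  ultimately have "tv u = tv v \<and> mv u = mv v"
    using div_mod_eq2[of "mv u" "2^?n" "mv v" "tv u" "tv v"] by blast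
  then have tbe: "map tb u = map tb v" and mbe: "map mb u = map mb v"
    unfolding tv_def mv_def using len u v mb_lt
    by (auto intro!: bval_inj)
  have "\<forall>i<length u. u!i = v!i"
  proof (intro allI impI)
    fix i assume i: "i < length u"
    have "tb (u!i) = tb (v!i)" using arg_cong[OF tbe, of "\<lambda>l. l!i"] i len by simp
    moreover have "mb (u!i) = mb (v!i)" using arg_cong[OF mbe, of "\<lambda>l. l!i"] i len by simp
    ultimately show "u!i = v!i" unfolding tb_def mb_def by (metis div_mult_mod_eq)
  qed
  then show "u = v" using len by (simp add: list_eq_iff_nth_eq)
qed



lemma LL_sub: "LL \<subseteq> lists {0..3}" by (auto simp: LL_def)

lemma mb_simps [simp]: "mb 0 = 0" "mb 1 = 0" "mb 2 = 1" "mb 3 = 1"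
  by (auto simp: mb_def)

lemma infinite_LL: "infinite LL"
proof -
  let ?g = "\<lambda>n::nat. (2::nat) # replicate n 0"
  have "inj ?g" by (auto simp: inj_on_def)
  moreover have "range ?g \<subseteq> LL"
    by (auto simp: LL_def mb_def)
  ultimately show ?thesis
    by (meson finite_imageD finite_subset infinite_UNIV_nat inj_on_subset subset_UNIV)
qed

lemma code_inj_LL: "inj_on code LL"
  using code_inj LL_sub inj_on_subset by blast

definition SS :: "nat set" where "SS = code ` LL"

lemma infinite_SS: "infinite SS"
  unfolding SS_def using infinite_LL code_inj_LL finite_image_iff by blast

definition fL :: "nat \<Rightarrow> nat list" where
  "fL n = the_inv_into LL code (enumerate SS n)"

lemma bij_code: "bij_betw code LL SS"
  unfolding SS_def using code_inj_LL by (simp add: bij_betw_def)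

lemma bij_fL: "bij_betw fL UNIV LL"
proof -
  have "bij_betw (the_inv_into LL code \<circ> enumerate SS) UNIV LL"
    by (rule bij_betw_trans[OF bij_enumerate[OF infinite_SS] bij_betw_the_inv_into[OF bij_code]])
  then show ?thesis unfolding fL_def comp_def .
qed

lemma fL_in: "fL n \<in> LL" using bij_fL bij_betwE by blast

lemma code_fL: "code (fL n) = enumerate SS n"
  unfolding fL_def
  by (rule f_the_inv_into_f[OF code_inj_LL]) (metis SS_def enumerate_in_set infinite_SS)

lemma fL_less_iff: "ltc (fL m) (fL n) \<longleftrightarrow> m < n"
  unfolding ltc_def code_fL using infinite_SS by simp

lemma fL_le_iff: "code (fL m) \<le> code (fL n) \<longleftrightarrow> m \<le> n"
  unfolding code_fL using infinite_SS by simp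

lemma fL_surj: "w \<in> LL \<Longrightarrow> \<exists>i. fL i = w"
  using bij_fL by (metis bij_betw_def imageE)

lemma fL_inj: "fL i = fL j \<Longrightarrow> i = j"
  using bij_fL by (metis bij_betw_def inj_eq)

lemma pred_set: "{v \<in> LL. ltc v (fL n)} = fL ` {..<n}"
proof
  show "{v \<in> LL. ltc v (fL n)} \<subseteq> fL ` {..<n}"
  proof
    fix v assume "v \<in> {v \<in> LL. ltc v (fL n)}"
    then obtain i where "fL i = v" "ltc v (fL n)" using fL_surj by blast
    then show "v \<in> fL ` {..<n}" using fL_less_iff by auto
  qed
  show "fL ` {..<n} \<subseteq> {v \<in> LL. ltc v (fL n)}"
    using fL_in fL_less_iff by auto
qed

lemma card_pred: "card {v \<in> LL. ltc v (fL n)} = n"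
proof -
  have "inj_on fL {..<n}" using fL_inj by (auto simp: inj_on_def)
  then show ?thesis unfolding pred_set by (simp add: card_image)
qed

lemma ans_rep_fL: "ans_rep LL ltc n = fL n"
  unfolding ans_rep_def
proof (rule the_equality)
  show "fL n \<in> LL \<and> card {v \<in> LL. ltc v (fL n)} = n" using fL_in card_pred by simp
  fix w assume "w \<in> LL \<and> card {v \<in> LL. ltc v w} = n"
  then obtain i where "fL i = w" "card {v \<in> LL. ltc v w} = n" using fL_surj by blast
  then show "w = fL n" using card_pred by metis
qed

lemma consec:
  assumes "fL i = w" "fL j = w'" "code w < code w'"
    and none: "\<not> (\<exists>v\<in>LL. code w < code v \<and> code v < code w')"
  shows "j = Suc i"
proof -
  have "i < j" using assms fL_less_iff ltc_def by metis
  show ?thesis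
  proof (rule ccontr)
    assume "j \<noteq> Suc i"
    then have "Suc i < j" using \<open>i < j\<close> by simp
    then have "code w < code (fL (Suc i))" "code (fL (Suc i)) < code w'"
      using assms fL_less_iff ltc_def by (metis lessI)+
    then show False using none fL_in by blast
  qed
qed

definition blk :: "nat list \<Rightarrow> nat \<Rightarrow> nat list" where
  "blk b p = take p b @ [b!p + 2] @ drop (Suc p) b"

lemma bval_zero: "sum_list xs = (0::nat) \<Longrightarrow> bval xs = 0"
  by (induction xs) auto

lemma bval_pow: "sum_list xs = (1::nat) \<Longrightarrow> \<exists>j. bval xs = 2^j"
proof (induction xs)
  case Nil then show ?case by simp
next
  case (Cons x xs)
  show ?case
  proof (cases x)
    case 0 then show ?thesis using Cons by simp
  next
    case (Suc y)
    then have "x = 1" "sum_list xs = 0" using Cons.prems by auto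
    then show ?thesis using bval_zero by auto
  qed
qed

lemma mv_LL: "w \<in> LL \<Longrightarrow> \<exists>j. mv w = 2^j"
  unfolding LL_def mv_def using bval_pow by auto

lemma tb_small: "c < 2 \<Longrightarrow> tb c = c" by (simp add: tb_def)
lemma mb_small: "c < 2 \<Longrightarrow> mb c = 0" by (simp add: mb_def)

context
  fixes b :: "nat list" and p :: nat
  assumes b01: "\<forall>y\<in>set b. y < 2" and p: "p < length b"
begin

lemma blk_len: "length (blk b p) = length b"
  using p by (simp add: blk_def)

lemma bp_lt: "b ! p < 2" using b01 p by simp

lemma map_tb_blk: "map tb (blk b p) = b"
proof -
  have "map tb (take p b) = take p b"
    by (rule map_idI) (meson b01 in_set_takeD tb_small)
  moreover have "map tb (drop (Suc p) b) = drop (Suc p) b"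
    by (rule map_idI) (meson b01 in_set_dropD tb_small)
  moreover have "tb (b!p + 2) = b!p" using bp_lt by (simp add: tb_def)
  ultimately show ?thesis using p
    by (simp add: blk_def id_take_nth_drop[symmetric])
qed

lemma map_mb_blk: "map mb (blk b p) = replicate p 0 @ [1] @ replicate (length b - Suc p) 0"
proof -
  have "map mb (take p b) = map (\<lambda>_. 0) (take p b)"
    by (rule map_cong) (auto dest: in_set_takeD simp: b01 mb_small)
  then have "map mb (take p b) = replicate p 0"
    using p by (simp add: map_replicate_const)
  moreover have "map mb (drop (Suc p) b) = map (\<lambda>_. 0) (drop (Suc p) b)"
    by (rule map_cong) (auto dest: in_set_dropD simp: b01 mb_small)
  then have "map mb (drop (Suc p) b) = replicate (length b - Suc p) 0"
    by (simp add: map_replicate_const)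
  moreover have "mb (b!p + 2) = 1" using bp_lt by (simp add: mb_def)
  ultimately show ?thesis by (simp add: blk_def)
qed

lemma blk_LL: "blk b p \<in> LL"
proof -
  have "set (blk b p) \<subseteq> {0..3}"
    using b01 bp_lt by (auto simp: blk_def dest!: in_set_takeD in_set_dropD)
  then show ?thesis unfolding LL_def using map_mb_blk by auto
qed

lemma code_blk: "code (blk b p) = 4^length b + bval b * 2^length b + 2^(length b - Suc p)"
  unfolding code_def tv_def mv_def map_tb_blk map_mb_blk blk_len
  by (simp add: bval_append)

end

definition dlt :: "nat \<Rightarrow> nat \<Rightarrow> nat" where
  "dlt q c = (if q = 0 then (if 2 \<le> c then 1 + c mod 2 else 0) else q)"

definition tau :: "nat \<Rightarrow> nat" where "tau q = (if q = 2 then 1 else 0)"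

definition xx :: "nat \<Rightarrow> nat" where "xx n = tau (foldl dlt 0 (ans_rep LL ltc n))"

lemma foldl_dlt_small: "\<forall>c\<in>set xs. c < 2 \<Longrightarrow> foldl dlt 0 xs = 0"
  by (induction xs) (auto simp: dlt_def)

lemma foldl_dlt_pos: "q \<noteq> 0 \<Longrightarrow> foldl dlt q xs = q"
  by (induction xs) (auto simp: dlt_def)

lemma xx_blk:
  assumes b01: "\<forall>y\<in>set b. y < 2" and p: "p < length b" and "fL i = blk b p"
  shows "xx i = b ! p"
proof -
  have bp: "b!p < 2" using b01 p by simp
  have "foldl dlt 0 (take p b) = 0" using b01 by (auto intro!: foldl_dlt_small dest: in_set_takeD)
  then have "foldl dlt 0 (blk b p) = 1 + b!p"
    using bp foldl_dlt_pos by (simp add: blk_def dlt_def)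
  moreover have "b!p = 0 \<or> b!p = 1" using bp by auto
  ultimately show ?thesis using assms unfolding xx_def ans_rep_fL by (auto simp: tau_def)
qed

lemma no_between:
  assumes b01: "\<forall>y\<in>set b. y < 2" and p: "Suc p < length b"
  shows "\<not> (\<exists>v\<in>LL. code (blk b (Suc p)) < code v \<and> code v < code (blk b p))"
proof
  assume "\<exists>v\<in>LL. code (blk b (Suc p)) < code v \<and> code v < code (blk b p)"
  then obtain v where v: "v \<in> LL" and lo: "code (blk b (Suc p)) < code v" and hi: "code v < code (blk b p)"
    by blast
  let ?n = "length b"
  define q where "q = ?n - Suc (Suc p)"
  have q1: "?n - Suc p = Suc q" using p q_def by simp
  have c1: "code (blk b (Suc p)) = 4^?n + bval b * 2^?n + 2^q"
    using code_blk[OF b01 p] q_def by simp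
  have c2: "code (blk b p) = 4^?n + bval b * 2^?n + 2 * 2^q"
    using code_blk[OF b01] p q1 by simp
  have vl: "v \<in> lists {0..3}" using v LL_sub by auto
  have "blk b p \<in> LL" by (rule blk_LL[OF b01]) (use p in simp)
  moreover have "blk b (Suc p) \<in> LL" by (rule blk_LL[OF b01]) (use p in simp)
  ultimately have bl: "blk b p \<in> lists {0..3}" "blk b (Suc p) \<in> lists {0..3}"
    using LL_sub by auto
  have len: "length v = ?n"
  proof -
    have "length v \<le> length (blk b p)" using code_le_len[OF vl bl(1)] hi by simp
    moreover have "length (blk b (Suc p)) \<le> length v" using code_le_len[OF bl(2) vl] lo by simp
    ultimately show ?thesis using blk_len[OF b01] p by simp
  qed
  have qn: "2 * 2^q \<le> (2::nat)^?n" using q1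
    by (metis diff_le_self power_Suc power_increasing one_le_numeral)
  have mvl: "mv v < 2^?n" using mv_lt[OF vl] len by simp
  have lo': "bval b * 2^?n + 2^q < tv v * 2^?n + mv v" using lo c1 len unfolding code_def by simp
  have hi': "tv v * 2^?n + mv v < bval b * 2^?n + 2 * 2^q" using hi c2 len unfolding code_def by simp
  have tveq: "tv v = bval b"
  proof (rule ccontr)
    assume "tv v \<noteq> bval b"
    then consider "tv v < bval b" | "bval b < tv v" by linarith
    then show False
    proof cases
      case 1
      then have "tv v * 2^?n + mv v < (tv v + 1) * 2^?n" using mvl by simp
      also have "\<dots> \<le> bval b * 2^?n" using 1 by (intro mult_le_mono1) simp
      finally show False using lo' by simp
    next
      case 2
      then have "(bval b + 1) * 2^?n \<le> tv v * 2^?n" by (intro mult_le_mono1) simp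
      then show False using hi' qn by simp
    qed
  qed
  then have "2^q < mv v" "mv v < 2 * 2^q" using lo' hi' by simp_all
  moreover obtain j where "mv v = 2^j" using mv_LL[OF v] by blast
  ultimately have e1: "(2::nat)^q < 2^j" and e2: "(2::nat)^j < 2^Suc q" by simp_all
  have "q < j" using power_less_imp_less_exp[of "2::nat" q j] e1 by simp
  moreover have "j < Suc q" using power_less_imp_less_exp[of "2::nat" j "Suc q"] e2 by simp
  ultimately show False by simp
qed

lemma block_run:
  assumes b01: "\<forall>y\<in>set b. y < 2" and ne: "b \<noteq> []"
  shows "\<exists>K. \<forall>j<length b. xx (K + j) = b ! (length b - 1 - j)"
proof -
  let ?n = "length b"
  obtain K where K: "fL K = blk b (?n - 1)" using fL_surj blk_LL[OF b01] ne by force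
  have run: "j < ?n \<Longrightarrow> fL (K + j) = blk b (?n - 1 - j)" for j
  proof (induction j)
    case 0 then show ?case using K by simp
  next
    case (Suc j)
    define p where "p = ?n - 1 - Suc j"
    have pj: "?n - 1 - j = Suc p" using Suc.prems p_def by simp
    have p: "Suc p < ?n" using Suc.prems p_def by simp
    have IH: "fL (K + j) = blk b (Suc p)" by (metis Suc.IH Suc.prems Suc_lessD pj)
    obtain i where i: "fL i = blk b p" using fL_surj blk_LL[OF b01] p by force
    have "code (blk b (Suc p)) < code (blk b p)"
      using code_blk[OF b01 p] code_blk[OF b01] p
      by (simp add: power_strict_increasing_iff Suc_diff_Suc)
    then have "i = Suc (K + j)" using consec[OF IH i] no_between[OF b01 p] by blast
    then show ?case using i p_def by simp
  qed
  show ?thesis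
  proof (intro exI allI impI)
    fix j assume "j < ?n"
    then show "xx (K + j) = b ! (?n - 1 - j)"
      using xx_blk[OF b01 _ run] by simp
  qed
qed

lemma factor:
  assumes "\<forall>y\<in>set s. y < 2" "s \<noteq> []"
  shows "\<exists>K. \<forall>j<length s. xx (K + j) = s ! j"
proof -
  obtain K where "\<forall>j<length (rev s). xx (K + j) = rev s ! (length (rev s) - 1 - j)"
    using block_run[of "rev s"] assms by auto
  then show ?thesis by (auto simp: rev_nth)
qed



lemma regular_by_dfa:
  fixes delta :: "'s::countable \<Rightarrow> 'a \<Rightarrow> 's"
  assumes "finite Gam" "finite Q" "q0 \<in> Q" "F \<subseteq> Q"
    "\<forall>q\<in>Q. \<forall>c\<in>Gam. delta q c \<in> Q"
    "Lg = {w \<in> lists Gam. foldl delta q0 w \<in> F}"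
  shows "regular_lang Lg"
proof -
  define d' where "d' n c = to_nat (delta (from_nat n) c)" for n c
  have fd: "foldl d' (to_nat q) w = to_nat (foldl delta q w)" for q w
    by (induction w arbitrary: q) (auto simp: d'_def)
  show ?thesis
    unfolding regular_lang_def
  proof (intro exI conjI)
    show "finite Gam" "finite (to_nat ` Q)" "to_nat q0 \<in> to_nat ` Q" "to_nat ` F \<subseteq> to_nat ` Q"
      using assms by auto
    show "\<forall>q\<in>to_nat ` Q. \<forall>c\<in>Gam. d' q c \<in> to_nat ` Q"
      using assms(5) by (auto simp: d'_def)
    show "Lg = {w \<in> lists Gam. foldl d' (to_nat q0) w \<in> to_nat ` F}"
      unfolding fd assms(6) by (auto simp: inj_image_mem_iff)
  qed
qed

definition cmpn :: "nat \<Rightarrow> nat \<Rightarrow> nat" where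
  "cmpn x y = (if x < y then 1 else if y < x then 2 else 0)"
definition upd :: "nat \<Rightarrow> nat \<Rightarrow> nat \<Rightarrow> nat" where
  "upd c x y = (if c = 0 then cmpn x y else c)"
definition phS :: "nat \<Rightarrow> nat" where
  "phS ph = (if ph = 0 \<or> ph = 3 then 3 else if ph = 1 \<or> ph = 2 then 2 else 4)"
definition phN :: "nat \<Rightarrow> nat" where
  "phN ph = (if ph \<le> 1 then 1 else 4)"

type_synonym st = "nat \<times> nat \<times> nat \<times> nat \<times> nat"

fun stp :: "st \<Rightarrow> nat option \<Rightarrow> nat option \<Rightarrow> st" where
  "stp (ph,cu,cv,tc,mc) a None = (4,0,0,0,0)"
| "stp (ph,cu,cv,tc,mc) None (Some b) = (phN ph, cu, min 2 (cv + mb b), tc, mc)"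
| "stp (ph,cu,cv,tc,mc) (Some a) (Some b) =
     (phS ph, min 2 (cu + mb a), min 2 (cv + mb b), upd tc (tb a) (tb b), upd mc (mb a) (mb b))"

definition stp2 :: "st \<Rightarrow> nat option \<times> nat option \<Rightarrow> st" where
  "stp2 s z = stp s (fst z) (snd z)"

lemma stp2_pair [simp]: "stp2 s (a,b) = stp s a b" by (simp add: stp2_def)

definition dl :: "st \<Rightarrow> nat option list \<Rightarrow> st" where
  "dl s l = (if length l = 2 then stp s (l!0) (l!1) else (4,0,0,0,0))"

definition lett :: "nat option \<times> nat option \<Rightarrow> nat option list" where
  "lett z = [fst z, snd z]"

lemma foldl_dl: "foldl dl s (map lett zs) = foldl stp2 s zs"
  by (induction zs arbitrary: s) (auto simp: dl_def lett_def stp2_def)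

lemma cmpn_step:
  fixes x y X Y n :: nat
  assumes "x < 2" "y < 2" "X < 2^n" "Y < 2^n"
  shows "upd (upd c x y) X Y = upd c (x * 2^n + X) (y * 2^n + Y)"
proof -
  have A: "x < y \<Longrightarrow> x * 2^n + X < y * 2^n + Y"
  proof -
    assume "x < y"
    then have "x = 0" "y = 1" using assms by auto
    then show ?thesis using assms by simp
  qed
  have B: "y < x \<Longrightarrow> y * 2^n + Y < x * 2^n + X"
  proof -
    assume "y < x"
    then have "y = 0" "x = 1" using assms by auto
    then show ?thesis using assms by simp
  qed
  show ?thesis using A B unfolding upd_def cmpn_def
    by (cases "x = y") auto
qed

lemma min2_assoc [simp]: "min 2 (min 2 (a::nat) + s) = min 2 (a + s)" by auto

lemma phS_phS [simp]: "phS (phS ph) = phS ph" by (simp add: phS_def)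
lemma phN_phN [simp]: "phN (phN ph) = phN ph" by (simp add: phN_def)

lemma tv_cons: "tv (a # w) = tb a * 2^length w + tv w" by (simp add: tv_def)
lemma mv_cons: "mv (a # w) = mb a * 2^length w + mv w" by (simp add: mv_def)

lemma foldA:
  assumes "length u = length v" "u \<in> lists {0..3}" "v \<in> lists {0..3}"
  shows "cu \<le> 2 \<Longrightarrow> cv \<le> 2 \<Longrightarrow> foldl stp2 (ph,cu,cv,tc,mc) (zip (map Some u) (map Some v)) =
    (if u = [] then ph else phS ph, min 2 (cu + sum_list (map mb u)), min 2 (cv + sum_list (map mb v)),
     upd tc (tv u) (tv v), upd mc (mv u) (mv v))"
  using assms
proof (induction u v arbitrary: ph cu cv tc mc rule: list_induct2)
  case Nil then show ?case by (simp add: tv_def mv_def upd_def cmpn_def)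
next
  case (Cons x xs y ys)
  have x: "x \<le> 3" "y \<le> 3" using Cons.prems by auto
  have l: "xs \<in> lists {0..3}" "ys \<in> lists {0..3}" using Cons.prems by auto
  note IH = Cons.IH[of "min 2 (cu + mb x)" "min 2 (cv + mb y)" "phS ph" "upd tc (tb x) (tb y)" "upd mc (mb x) (mb y)", OF _ _ l]
  have e1: "upd (upd tc (tb x) (tb y)) (tv xs) (tv ys) = upd tc (tv (x#xs)) (tv (y#ys))"
    unfolding tv_cons Cons.hyps(1)
    by (rule cmpn_step) (use tv_lt[of xs] tv_lt[of ys] Cons.hyps(1) in auto)
  have e2: "upd (upd mc (mb x) (mb y)) (mv xs) (mv ys) = upd mc (mv (x#xs)) (mv (y#ys))"
    unfolding mv_cons Cons.hyps(1)
    by (rule cmpn_step) (use mv_lt[OF l(1)] mv_lt[OF l(2)] mb_lt x Cons.hyps(1) in auto)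
  show ?case using IH e1 e2 by (simp add: stp2_def add.assoc)
qed

lemma foldB:
  assumes "length v = k"
  shows "cv \<le> 2 \<Longrightarrow> foldl stp2 (ph,cu,cv,tc,mc) (zip (replicate k None) (map Some v)) =
    (if k = 0 then ph else phN ph, cu, min 2 (cv + sum_list (map mb v)), tc, mc)"
  using assms
proof (induction v arbitrary: k ph cv)
  case Nil then show ?case by simp
next
  case (Cons y ys)
  then obtain k' where k: "k = Suc k'" "length ys = k'" by auto
  show ?case using Cons.IH[where k=k' and ph="phN ph" and cv="min 2 (cv + mb y)"] k by (simp add: stp2_def add.assoc)
qed

lemma foldFS:
  assumes "u \<in> lists {0..3}" "v \<in> lists {0..3}" "length v = k + length u"
  shows "foldl stp2 (0,0,0,0,0) (zip (replicate k None @ map Some u) (map Some v)) =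
    (if u = [] then (if k = 0 then 0 else 1) else (if k = 0 then 3 else 2),
     min 2 (sum_list (map mb u)), min 2 (sum_list (map mb v)),
     cmpn (tv u) (tv (drop k v)), cmpn (mv u) (mv (drop k v)))"
proof -
  let ?v1 = "take k v" and ?v2 = "drop k v"
  have v: "map Some v = map Some ?v1 @ map Some ?v2" by (simp flip: map_append)
  have len1: "length ?v1 = k" using assms by simp
  have len2: "length u = length ?v2" using assms by simp
  have l2: "?v2 \<in> lists {0..3}" using assms(2) by (auto dest: in_set_dropD)
  have z: "zip (replicate k None @ map Some u) (map Some v) =
           zip (replicate k None) (map Some ?v1) @ zip (map Some u) (map Some ?v2)"
    unfolding v by (rule zip_append) (use assms(3) in simp)
  have sv: "sum_list (map mb v) = sum_list (map mb ?v1) + sum_list (map mb ?v2)"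
    by (metis append_take_drop_id map_append sum_list_append)
  have B: "foldl stp2 (0,0,0,0,0) (zip (replicate k None) (map Some ?v1)) =
           (if k = 0 then 0 else 1, 0, min 2 (sum_list (map mb ?v1)), 0, 0)"
    using foldB[OF len1, of 0 0 0 0 0] by (simp add: phN_def)
  show ?thesis
    unfolding z foldl_append B
    using foldA[OF len2 assms(1) l2, of 0 "min 2 (sum_list (map mb ?v1))" "if k = 0 then 0 else 1" 0 0] sv
    by (simp add: phS_def upd_def)
qed



lemma fst_stp_Some: "fst (stp s a (Some b)) = (case a of None \<Rightarrow> phN (fst s) | Some _ \<Rightarrow> phS (fst s))"
  by (cases s rule: prod_cases5; cases a) auto

lemma phN_le1: "phN ph \<le> 1 \<longleftrightarrow> ph \<le> 1" by (simp add: phN_def)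
lemma phS_ge2: "2 \<le> phS ph" by (simp add: phS_def)
lemma phN_ne23: "phN ph \<noteq> 2 \<and> phN ph \<noteq> 3" by (simp add: phN_def)
lemma phS_23: "phS ph \<in> {2,3} \<longleftrightarrow> ph \<le> 3" by (simp add: phS_def)

lemma phase1:
  "\<forall>z\<in>set zs. snd z \<noteq> None \<Longrightarrow> fst (foldl stp2 (0,0,0,0,0) zs) \<le> 1 \<Longrightarrow> \<forall>z\<in>set zs. fst z = None"
proof (induction zs rule: rev_induct)
  case Nil then show ?case by simp
next
  case (snoc z xs)
  obtain a b where z: "z = (a, Some b)" using snoc.prems by (cases z) auto
  let ?s = "foldl stp2 (0,0,0,0,0) xs"
  have h1: "fst (stp ?s a (Some b)) \<le> 1" using snoc.prems z by simp
  have "a = None \<and> fst ?s \<le> 1"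
  proof (cases a)
    case None then show ?thesis using h1 phN_le1 by (simp add: fst_stp_Some)
  next
    case (Some a') then show ?thesis using h1 phS_ge2[of "fst ?s"] by (simp add: fst_stp_Some)
  qed
  then show ?case using snoc z by auto
qed

lemma phase2:
  "\<forall>z\<in>set zs. snd z \<noteq> None \<Longrightarrow> fst (foldl stp2 (0,0,0,0,0) zs) \<in> {2,3} \<Longrightarrow>
    \<exists>k u. map fst zs = replicate k None @ map Some u"
proof (induction zs rule: rev_induct)
  case Nil then show ?case by simp
next
  case (snoc z xs)
  obtain a b where z: "z = (a, Some b)" using snoc.prems by (cases z) auto
  let ?s = "foldl stp2 (0,0,0,0,0) xs"
  have h: "fst (stp ?s a (Some b)) \<in> {2,3}" using snoc.prems(2) z by simp
  show ?case
  proof (cases a)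
    case None then show ?thesis using h phN_ne23 by (simp add: fst_stp_Some)
  next
    case (Some a')
    then have "fst ?s \<le> 3" using h phS_23 by (simp add: fst_stp_Some)
    show ?thesis
    proof (cases "fst ?s \<le> 1")
      case True
      then have "\<forall>z\<in>set xs. fst z = None" using phase1 snoc.prems by auto
      then have "map fst xs = replicate (length xs) None" by (simp add: map_replicate_const[symmetric] cong: map_cong)
      then show ?thesis using z Some by (intro exI[of _ "length xs"] exI[of _ "[a']"]) simp
    next
      case False
      then obtain k u where "map fst xs = replicate k None @ map Some u"
        using snoc \<open>fst ?s \<le> 3\<close> by fastforce
      then show ?thesis using z Some by (intro exI[of _ k] exI[of _ "u @ [a']"]) simp
    qed
  qed
qed

lemma RT:
  assumes "length (fL x) \<le> length (fL y)"
  shows "rep_tuple LL ltc [x,y] = map lett (zip (pad_left (length (fL y)) (fL x)) (map Some (fL y)))"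
proof -
  let ?u = "fL x" and ?v = "fL y"
  have m: "foldr max (map length [?u, ?v]) 0 = length ?v" using assms by simp
  have lp: "length (pad_left (length ?v) ?u) = length ?v" using assms by (simp add: pad_left_def)
  have pv: "pad_left (length ?v) ?v = map Some ?v" by (simp add: pad_left_def)
  show ?thesis
    unfolding rep_tuple_def Let_def ans_rep_fL
    by (rule nth_equalityI) (auto simp: max_absorb2[OF assms] lp pv lett_def)
qed

definition Gam :: "nat option list set" where
  "Gam = (\<lambda>(a,b). [a, Some b]) ` (insert None (Some ` {0..3}) \<times> {0..3})"

definition QQ :: "st set" where
  "QQ = {0..4} \<times> {0..2} \<times> {0..2} \<times> {0..2} \<times> {0..2}"

definition FF :: "st set" where
  "FF = QQ \<inter> {(ph,cu,cv,tc,mc). cu = 1 \<and> cv = 1 \<and> (ph = 2 \<or> ph = 3 \<and> (tc = 1 \<or> tc = 0 \<and> mc \<noteq> 2))}"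

lemma finite_Gam: "finite Gam" unfolding Gam_def by simp
lemma finite_QQ: "finite QQ" unfolding QQ_def by simp

lemma cmpn_le: "cmpn x y \<le> 2" by (simp add: cmpn_def)
lemma upd_le: "c \<le> 2 \<Longrightarrow> upd c x y \<le> 2" by (simp add: upd_def cmpn_le)

lemma dl_closed: "s \<in> QQ \<Longrightarrow> c \<in> Gam \<Longrightarrow> dl s c \<in> QQ"
  unfolding Gam_def QQ_def
  by (cases s rule: prod_cases5) (auto simp: dl_def phN_def phS_def upd_le)

lemma Gam_lett: "lett (a, Some b) \<in> Gam \<longleftrightarrow> (a = None \<or> (\<exists>a'. a = Some a' \<and> a' \<le> 3)) \<and> b \<le> 3"
  unfolding Gam_def lett_def by auto

lemma sum1_ne: "sum_list (map mb u) = 1 \<Longrightarrow> u \<noteq> []" by auto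

lemma lang_eq:
  "rep_tuple LL ltc ` {[x, y] | x y. x \<le> y} = {W \<in> lists Gam. foldl dl (0,0,0,0,0) W \<in> FF}"
proof (intro equalityI subsetI)
  fix W assume "W \<in> rep_tuple LL ltc ` {[x, y] | x y. x \<le> y}"
  then obtain x y where xy: "x \<le> y" and W: "W = rep_tuple LL ltc [x,y]" by blast
  define u where "u = fL x"
  define v where "v = fL y"
  have uL: "u \<in> LL" and vL: "v \<in> LL" using fL_in u_def v_def by auto
  then have ul: "u \<in> lists {0..3}" and vl: "v \<in> lists {0..3}" using LL_sub by auto
  have cle: "code u \<le> code v" using xy fL_le_iff u_def v_def by simp
  have len: "length u \<le> length v" by (rule code_le_len[OF ul vl cle])
  define k where "k = length v - length u"
  have lk: "length v = k + length u" using len k_def by simp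
  have W2: "W = map lett (zip (replicate k None @ map Some u) (map Some v))"
    using W RT[of x y] len unfolding u_def v_def k_def by (simp add: pad_left_def)
  have "W \<in> lists Gam"
  proof -
    have "\<forall>z\<in>set (zip (replicate k None @ map Some u) (map Some v)). lett z \<in> Gam"
    proof
      fix z assume z: "z \<in> set (zip (replicate k None @ map Some u) (map Some v))"
      then have z': "(fst z, snd z) \<in> set (zip (replicate k None @ map Some u) (map Some v))" by simp
      note a = set_zip_leftD[OF z'] and b = set_zip_rightD[OF z']
      obtain b' where b': "snd z = Some b'" "b' \<le> 3" using b vl by auto
      have "fst z = None \<or> fst z \<in> Some ` set u" using a by (auto simp: set_replicate_conv_if split: if_splits)
      then have "fst z = None \<or> (\<exists>a'. fst z = Some a' \<and> a' \<le> 3)" using ul by auto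
      then show "lett z \<in> Gam" using Gam_lett[of "fst z" b'] b' by (metis prod.collapse)
    qed
    then show ?thesis unfolding W2 by auto
  qed
  moreover have "foldl dl (0,0,0,0,0) W \<in> FF"
  proof -
    have su: "sum_list (map mb u) = 1" and sv: "sum_list (map mb v) = 1" using uL vL by (auto simp: LL_def)
    have une: "u \<noteq> []" using sum1_ne[OF su] .
    have fs: "foldl dl (0,0,0,0,0) W = (if k = 0 then 3 else 2, 1, 1, cmpn (tv u) (tv (drop k v)), cmpn (mv u) (mv (drop k v)))"
      unfolding W2 foldl_dl foldFS[OF ul vl lk] using une su sv by simp
    show ?thesis
    proof (cases "k = 0")
      case True
      then have "length u = length v" using lk by simp
      then have "tv u < tv v \<or> (tv u = tv v \<and> mv u \<le> mv v)" using code_same_len ul vl cle by blast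
      then show ?thesis unfolding fs FF_def QQ_def using True by (auto simp: cmpn_def)
    next
      case False
      then show ?thesis unfolding fs FF_def QQ_def by (auto simp: cmpn_def)
    qed
  qed
  ultimately show "W \<in> {W \<in> lists Gam. foldl dl (0,0,0,0,0) W \<in> FF}" by simp
next
  fix W assume "W \<in> {W \<in> lists Gam. foldl dl (0,0,0,0,0) W \<in> FF}"
  then have WG: "W \<in> lists Gam" and acc: "foldl dl (0,0,0,0,0) W \<in> FF" by auto
  define zs where "zs = map (\<lambda>l. (l!0, l!1)) W"
  have Wz: "W = map lett zs"
  proof -
    have "\<forall>l\<in>set W. l = [l!0, l!1]" using WG unfolding Gam_def by auto
    then have "map lett zs = map id W" unfolding zs_def lett_def by (auto cong: map_cong)
    then show ?thesis by simp
  qed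
  have zsG: "\<forall>z\<in>set zs. (fst z = None \<or> (\<exists>a'. fst z = Some a' \<and> a' \<le> 3)) \<and> (\<exists>b. snd z = Some b \<and> b \<le> 3)"
    using WG unfolding zs_def Gam_def by auto
  define v where "v = map (the \<circ> snd) zs"
  have mv_: "map snd zs = map Some v" unfolding v_def using zsG by (auto cong: map_cong)
  have "\<forall>z\<in>set zs. the (snd z) \<in> {0..3}"
  proof
    fix z assume "z \<in> set zs"
    then obtain b where "snd z = Some b" "b \<le> 3" using zsG by blast
    then show "the (snd z) \<in> {0..3}" by simp
  qed
  then have vl: "v \<in> lists {0..3}" unfolding v_def by auto
  have f: "foldl stp2 (0,0,0,0,0) zs \<in> FF" using acc Wz foldl_dl by simp
  then have "fst (foldl stp2 (0,0,0,0,0) zs) \<in> {2,3}" unfolding FF_def by auto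
  moreover have "\<forall>z\<in>set zs. snd z \<noteq> None" using zsG by auto
  ultimately obtain k u where ku: "map fst zs = replicate k None @ map Some u" using phase2 by blast
  have "set u \<subseteq> {0..3}"
  proof
    fix a assume "a \<in> set u"
    then have "Some a \<in> set (map fst zs)" unfolding ku by simp
    then show "a \<in> {0..3}" using zsG by auto
  qed
  then have ul: "u \<in> lists {0..3}" by auto
  have lk: "length v = k + length u"
    using arg_cong[OF ku, of length] v_def by simp
  have zs2: "zs = zip (replicate k None @ map Some u) (map Some v)"
    by (metis ku mv_ zip_map_fst_snd)
  have fs: "foldl stp2 (0,0,0,0,0) zs = (if u = [] then (if k = 0 then 0 else 1) else (if k = 0 then 3 else 2),
     min 2 (sum_list (map mb u)), min 2 (sum_list (map mb v)),
     cmpn (tv u) (tv (drop k v)), cmpn (mv u) (mv (drop k v)))"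
    unfolding zs2 by (rule foldFS[OF ul vl lk])
  have su: "sum_list (map mb u) = 1" and sv: "sum_list (map mb v) = 1"
    using f unfolding fs FF_def by (auto simp: min_def split: if_splits)
  have une: "u \<noteq> []" using sum1_ne[OF su] .
  have uL: "u \<in> LL" and vL: "v \<in> LL" using su sv ul vl by (auto simp: LL_def)
  have cle: "code u \<le> code v"
  proof (cases "k = 0")
    case True
    then have c: "cmpn (tv u) (tv v) = 1 \<or> cmpn (tv u) (tv v) = 0 \<and> cmpn (mv u) (mv v) \<noteq> 2"
      using f une unfolding fs FF_def by auto
    have "length u = length v" using lk True by simp
    then show ?thesis using code_same_len[OF _ ul vl] c by (auto simp: cmpn_def split: if_splits)
  next
    case False
    then show ?thesis using code_len_less[OF ul] lk by (simp add: less_imp_le)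
  qed
  obtain i j where i: "fL i = u" and j: "fL j = v" using fL_surj uL vL by metis
  have ij: "i \<le> j" using fL_le_iff cle i j by metis
  have len: "length u \<le> length v" using lk by simp
  have "W = rep_tuple LL ltc [i, j]"
    using RT[of i j] len i j Wz zs2 lk by (simp add: pad_left_def)
  then show "W \<in> rep_tuple LL ltc ` {[x, y] | x y. x \<le> y}" using ij by blast
qed

lemma comparable: "S_comparable LL ltc"
proof -
  have 1: "(0,0,0,0,0) \<in> QQ" "FF \<subseteq> QQ" by (auto simp: QQ_def FF_def)
  have 2: "\<forall>q\<in>QQ. \<forall>c\<in>Gam. dl q c \<in> QQ" by (simp add: dl_closed)
  show ?thesis
    unfolding S_comparable_def S_recognizable_def
    by (rule regular_by_dfa[OF finite_Gam finite_QQ 1 2 lang_eq])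
qed



lemma isANS: "is_ANS {0..3} LL ltc"
  unfolding is_ANS_def
  using LL_sub infinite_LL bij_fL fL_less_iff by (auto intro!: exI[of _ fL])

lemma automatic: "S_automatic {0..3} LL ltc xx"
  unfolding S_automatic_def
proof (intro exI conjI)
  show "finite {0,1,2::nat}" by simp
  show "(0::nat) \<in> {0,1,2}" by simp
  show "\<forall>q\<in>{0,1,2}. \<forall>c\<in>{0..3}. dlt q c \<in> {0,1,2::nat}"
    by (auto simp: dlt_def)
  show "\<forall>n. xx n = tau (foldl dlt 0 (ans_rep LL ltc n))" by (simp add: xx_def)
qed

lemma range_xx: "range xx \<subseteq> {0,1}"
  by (auto simp: xx_def tau_def)

lemma in_closure:
  assumes a: "\<forall>i. a i \<in> {0,1::nat}"
  shows "a \<in> orbit_closure xx"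
proof -
  have "\<forall>M. \<exists>K. \<forall>j<length (map a [0..<Suc M]). xx (K + j) = map a [0..<Suc M] ! j"
  proof
    fix M
    show "\<exists>K. \<forall>j<length (map a [0..<Suc M]). xx (K + j) = map a [0..<Suc M] ! j"
    proof (rule factor)
      show "\<forall>y\<in>set (map a [0..<Suc M]). y < 2" 
      proof
        fix y assume "y \<in> set (map a [0..<Suc M])"
        then obtain i where "y = a i" by auto
        then show "y < 2" using a[rule_format, of i] by auto
      qed
      show "map a [0..<Suc M] \<noteq> []" by simp
    qed
  qed
  then obtain K where K: "\<And>M j. j < Suc M \<Longrightarrow> xx (K M + j) = a j"
    by (metis (no_types, lifting) length_map diff_zero length_upt nth_map_upt add_0)
  define sig where "sig M = (\<lambda>i. xx (K M + i))" for M
  have comp: "((\<lambda>M. sig M i) \<longlongrightarrow> a i) sequentially" for i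
  proof (rule tendsto_eventually)
    show "\<forall>\<^sub>F M in sequentially. sig M i = a i"
      unfolding eventually_sequentially sig_def using K by (intro exI[of _ i]) auto
  qed
  have "limitin (product_topology (\<lambda>i. euclidean) UNIV) sig a sequentially"
    unfolding limitin_componentwise using comp by simp
  then have lim: "(sig \<longlongrightarrow> a) sequentially"
    by (simp add: euclidean_product_topology)
  have "a \<in> closure (range (\<lambda>k i. xx (k + i)))"
  proof (rule Lim_in_closed_set[OF closed_closure _ _ lim])
    show "\<forall>\<^sub>F M in sequentially. sig M \<in> closure (range (\<lambda>k i. xx (k + i)))"
    proof (intro always_eventually allI)
      fix M
      have "sig M \<in> range (\<lambda>k i. xx (k + i))" unfolding sig_def by (rule rangeI)
      then show "sig M \<in> closure (range (\<lambda>k i. xx (k + i)))" by (rule subsetD[OF closure_subset])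
    qed
    show "sequentially \<noteq> bot" by simp
  qed
  then show ?thesis unfolding orbit_closure_def .
qed

lemma winning: "(\<lambda>_. 1) \<in> winning_shift {0,1} (orbit_closure xx)"
  unfolding winning_shift_def
proof (intro CollectI conjI exI[of _ "\<lambda>_. {0,1}"])
  show "\<forall>j. (1::nat) < card {0,1::nat}" by simp
  show "\<forall>h::nat list. {0,1} \<subseteq> {0,1::nat} \<and> card {0,1::nat} = 1 + 1" by simp
  show "\<forall>a. (\<forall>j. a j \<in> {0,1::nat}) \<longrightarrow> a \<in> orbit_closure xx"
    using in_closure by blast
qed

lemma icd: "infinite_coding_dimension (winning_shift {0,1} (orbit_closure xx))"
  unfolding infinite_coding_dimension_def
proof
  fix d :: nat
  show "\<exists>y\<in>winning_shift {0,1} (orbit_closure xx). \<exists>n. d < (\<Sum>i<n. y i)"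
    using winning by (intro bexI[of _ "\<lambda>_. 1"] exI[of _ "Suc d"]) auto
qed

theorem mainTheorem9:
  shows "\<exists>(Alph :: nat set) (Lang :: nat list set) (lt :: nat list \<Rightarrow> nat list \<Rightarrow> bool)
            (x :: nat \<Rightarrow> nat) (A :: nat set).
           is_ANS Alph Lang lt \<and> S_comparable Lang lt \<and>
           finite A \<and> range x \<subseteq> A \<and> S_automatic Alph Lang lt x \<and>
           infinite_coding_dimension (winning_shift A (orbit_closure x))"
  apply (rule exI[of _ "{0..3}"], rule exI[of _ LL], rule exI[of _ ltc], rule exI[of _ xx], rule exI[of _ "{0,1}"])
  using isANS comparable range_xx automatic icd by simp

end
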